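(* Assume the Setting below together with (A-sub), (A-outer), (A-sing). Let $\gamma_1,\dots,\gamma_c\in\mathbb R^d$ be server vectors with fixed vectors $\mathbb E\gamma_z\in\mathcal P^*$ satisfying $\|\mathbb E\gamma_z-\mathbb E\mu\|_2\le\delta_s$ for all $z$. Let $\hat{\mathcal P}$ be any affine subspace of $\mathbb R^d$ and $\Delta\Gamma=[\Pi_{\hat{\mathcal P}}(\gamma_1)-\mathbb E\gamma_1,\dots,\Pi_{\hat{\mathcal P}}(\gamma_c)-\mathbb E\gamma_c]\in\mathbb R^{d\times c}$. Then, with $\|\cdot\|_2$ the spectral norm, $$\|\Delta\Gamma\|_2^2\le2\sum_{z=1}^c\|\gamma_z-\mathbb E\gamma_z\|_2^2+4c\Big(\frac1{n-2f}+\frac{(\delta+\delta_s)^2}{\sigma^2}\Big)\Big(\ell_t(\hat{\mathcal P})+\sum_{i\in\mathcal H}\|g_i-\mathbb Eg_i\|_2^2\Big).$$ Consequently, if $\mathbb E\|g_i-\mathbb Eg_i\|_2^2\le\epsilon^2$ ($i\in\mathcal H$) and $\mathbb E\|\gamma_z-\mathbb E\gamma_z\|_2^2\le\epsilon_s^2$ for all $z$, then $\mathbb E\|\Delta\Gamma\|_2^2\le2c\epsilon_s^2+4c\big(\frac1{n-2f}+\frac{(\delta+\delta_s)^2}{\sigma^2}\big)\big(\mathbb E\ell_t(\hat{\mathcal P})+|\mathcal H|\epsilon^2\big)$.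
   Context: Setting: let $n,f,c,d$ be positive integers with $c\ge2$, $d\ge c$, $n-2f\ge1$. The index set $\{1,\dots,n\}$ is partitioned as $\mathcal H\sqcup\mathcal B$ (honest and Byzantine clients) with $|\mathcal B|\le f$. Each client $i$ has a vector $g_i\in\mathbb R^d$; for $i\in\mathcal H$, $\mathbb Eg_i\in\mathbb R^d$ denotes a fixed vector (the expectation of $g_i$), and $\mathbb E\mu=\frac1{|\mathcal H|}\sum_{i\in\mathcal H}\mathbb Eg_i$. A $k$-dimensional affine subspace is $\mathcal P=\{U\lambda+m:\lambda\in\mathbb R^k\}$ with $U\in\mathbb R^{d\times k}$ having orthonormal columns and $m\in\mathbb R^d$; its orthogonal projection is $\Pi_{\mathcal P}(w)=UU^\top(w-m)+m$. The trimmed reconstruction loss of an affine subspace $\mathcal P$ is $\ell_t(\mathcal P)=\min_{S\subseteq\{1,\dots,n\},\,|S|=n-f}\sum_{i\in S}\|g_i-\Pi_{\mathcal P}(g_i)\|_2^2$. Assumptions: (A-sub) there is a $(c-1)$-dimensional affine subspace $\mathcal P^*$ containing $\mathbb Eg_i$ for all $i\in\mathcal H$; (A-outer) $\|\mathbb Eg_i-\mathbb E\mu\|_2\le\delta$ for all $i\in\mathcal H$; (A-sing) for every $S\subseteq\mathcal H$ with $|S|=n-2f$, the $d\times(n-2f)$ matrix with columns $\mathbb Eg_s-\frac1{n-2f}\sum_{s'\in S}\mathbb Eg_{s'}$ ($s\in S$) has $(c-1)$-th largest singular value at least $\sigma>0$. *)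

theory Defs
  imports "HOL-Probability.Probability"
begin

text \<open>A k-dimensional affine subspace P = {U lambda + m}. The d x k matrix U is
  represented by its columns U 0, ..., U (k-1) (vectors in real^'d).\<close>

definition orthonormal_cols :: "nat \<Rightarrow> (nat \<Rightarrow> real^'d) \<Rightarrow> bool" where
  "orthonormal_cols k U \<longleftrightarrow> (\<forall>j<k. \<forall>l<k. U j \<bullet> U l = (if j = l then 1 else 0))"

definition aff_sub :: "nat \<Rightarrow> (nat \<Rightarrow> real^'d) \<Rightarrow> real^'d \<Rightarrow> (real^'d) set" where
  "aff_sub k U m = {(\<Sum>j<k. lam j *\<^sub>R U j) + m | lam. True}"

definition aff_proj :: "nat \<Rightarrow> (nat \<Rightarrow> real^'d) \<Rightarrow> real^'d \<Rightarrow> real^'d \<Rightarrow> real^'d" where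
  "aff_proj k U m w = (\<Sum>j<k. (U j \<bullet> (w - m)) *\<^sub>R U j) + m"

definition trimmed_loss ::
  "nat \<Rightarrow> nat \<Rightarrow> (nat \<Rightarrow> real^'d) \<Rightarrow> nat \<Rightarrow> (nat \<Rightarrow> real^'d) \<Rightarrow> real^'d \<Rightarrow> real" where
  "trimmed_loss n f g k U m =
     Min {(\<Sum>i\<in>S. (norm (g i - aff_proj k U m (g i)))\<^sup>2) | S. S \<subseteq> {1..n} \<and> card S = n - f}"

definition spec_norm :: "'i set \<Rightarrow> ('i \<Rightarrow> real^'d) \<Rightarrow> real" where
  "spec_norm I A = Sup {norm (\<Sum>i\<in>I. x i *\<^sub>R A i) | x. (\<Sum>i\<in>I. (x i)\<^sup>2) \<le> 1}"

definition is_svd :: "'i set \<Rightarrow> ('i \<Rightarrow> real^'d) \<Rightarrow> (nat \<Rightarrow> real) \<Rightarrow> bool" where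
  "is_svd I A s \<longleftrightarrow>
     (let r = min CARD('d) (card I) in
      (\<exists>(u :: nat \<Rightarrow> real^'d) (v :: nat \<Rightarrow> 'i \<Rightarrow> real).
          (\<forall>j<r. \<forall>l<r. u j \<bullet> u l = (if j = l then 1 else 0)) \<and>
          (\<forall>j<r. \<forall>l<r. (\<Sum>i\<in>I. v j i * v l i) = (if j = l then 1 else 0)) \<and>
          (\<forall>i\<in>I. A i = (\<Sum>j<r. (s j * v j i) *\<^sub>R u j))) \<and>
      (\<forall>j<r. 0 \<le> s j) \<and>
      (\<forall>j l. j \<le> l \<longrightarrow> l < r \<longrightarrow> s l \<le> s j) \<and>
      (\<forall>j\<ge>r. s j = 0))"

text \<open>The k-th largest singular value (k >= 1); 0 if k exceeds min(d,|I|).\<close>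
definition sing_val :: "nat \<Rightarrow> 'i set \<Rightarrow> ('i \<Rightarrow> real^'d) \<Rightarrow> real" where
  "sing_val k I A = (SOME s. is_svd I A s) (k - 1)"

end

theory Submission
  imports Defs
begin


definition ip :: "'i set \<Rightarrow> ('i \<Rightarrow> real) \<Rightarrow> ('i \<Rightarrow> real) \<Rightarrow> real" where
  "ip I x y = (\<Sum>i\<in>I. x i * y i)"

lemma ip_comm: "ip I x y = ip I y x" unfolding ip_def by (simp add: mult.commute)

lemma ip_sq_nonneg: "ip I x x \<ge> 0" unfolding ip_def by (simp add: sum_nonneg)

lemma ip_diff_right: "ip I x (\<lambda>i. a i - b i) = ip I x a - ip I x b"
  unfolding ip_def by (simp add: right_diff_distrib sum_subtractf)

lemma ip_sum_right: "ip I x (\<lambda>i. \<Sum>j\<in>J. c j * v j i) = (\<Sum>j\<in>J. c j * ip I x (v j))"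
proof -
  have "ip I x (\<lambda>i. \<Sum>j\<in>J. c j * v j i) = (\<Sum>i\<in>I. \<Sum>j\<in>J. c j * (x i * v j i))"
    unfolding ip_def by (simp add: sum_distrib_left mult.left_commute)
  also have "\<dots> = (\<Sum>j\<in>J. \<Sum>i\<in>I. c j * (x i * v j i))" by (rule sum.swap)
  also have "\<dots> = (\<Sum>j\<in>J. c j * ip I x (v j))" unfolding ip_def by (simp add: sum_distrib_left)
  finally show ?thesis .
qed

lemma ip_delta_right: "finite I \<Longrightarrow> i0 \<in> I \<Longrightarrow> ip I x (\<lambda>i. if i = i0 then 1 else 0) = x i0"
  unfolding ip_def by (simp add: if_distrib cong: if_cong)

lemma ip_scale_right: "ip I x (\<lambda>i. a * y i) = a * ip I x y"
  unfolding ip_def by (simp add: sum_distrib_left mult.left_commute)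

lemma count_complete:
  assumes fin: "finite I"
    and on: "\<forall>j<p. \<forall>l<p. ip I (v j) (v l) = (if j=l then 1 else 0)"
  shows "p \<le> card I \<and> (p < card I \<longrightarrow> (\<exists>w. ip I w w = 1 \<and> (\<forall>j<p. ip I (v j) w = 0)))"
proof -
  define W where "W i0 = (\<lambda>i. (if i=i0 then 1 else 0) - (\<Sum>j<p. v j i0 * v j i))" for i0
  have orth: "ip I (v l) (W i0) = 0" if "l<p" "i0\<in>I" for l i0
  proof -
    have "ip I (v l) (W i0) = v l i0 - (\<Sum>j<p. v j i0 * ip I (v l) (v j))"
      unfolding W_def ip_diff_right ip_sum_right ip_delta_right[OF fin that(2)] ..
    also have "(\<Sum>j<p. v j i0 * ip I (v l) (v j)) = (\<Sum>j<p. v j i0 * (if l = j then 1 else 0))"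
      using on that by (intro sum.cong) auto
    also have "\<dots> = v l i0" using that by (simp add: if_distrib cong: if_cong)
    finally show ?thesis by simp
  qed
  have selfW: "ip I (W i0) (W i0) = 1 - (\<Sum>j<p. (v j i0)^2)" if "i0\<in>I" for i0
  proof -
    have "ip I (W i0) (W i0) = W i0 i0 - (\<Sum>j<p. v j i0 * ip I (W i0) (v j))"
    proof -
      have "ip I (W i0) (W i0) = ip I (W i0) (\<lambda>i. (if i=i0 then 1 else 0) - (\<Sum>j<p. v j i0 * v j i))"
        by (simp add: W_def)
      thus ?thesis by (simp only: ip_diff_right ip_sum_right ip_delta_right[OF fin that])
    qed
    also have "(\<Sum>j<p. v j i0 * ip I (W i0) (v j)) = 0" using orth that by (simp add: ip_comm)
    finally show ?thesis by (simp add: W_def power2_eq_square)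
  qed
  have tot: "(\<Sum>i0\<in>I. ip I (W i0) (W i0)) = real (card I) - real p"
  proof -
    have "(\<Sum>i0\<in>I. ip I (W i0) (W i0)) = (\<Sum>i0\<in>I. 1 - (\<Sum>j<p. (v j i0)^2))"
      using selfW by simp
    also have "\<dots> = real (card I) - (\<Sum>i0\<in>I. \<Sum>j<p. (v j i0)^2)"
      by (simp add: sum_subtractf)
    also have "(\<Sum>i0\<in>I. \<Sum>j<p. (v j i0)^2) = (\<Sum>j<p. \<Sum>i0\<in>I. (v j i0)^2)" by (rule sum.swap)
    also have "\<dots> = (\<Sum>j<p. ip I (v j) (v j))"
      unfolding ip_def by (simp add: power2_eq_square)
    also have "\<dots> = real p" using on by simp
    finally show ?thesis .
  qed
  have "0 \<le> (\<Sum>i0\<in>I. ip I (W i0) (W i0))" by (simp add: sum_nonneg ip_sq_nonneg)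
  hence le: "p \<le> card I" using tot by simp
  moreover have "\<exists>w. ip I w w = 1 \<and> (\<forall>j<p. ip I (v j) w = 0)" if "p < card I"
  proof -
    have "0 < (\<Sum>i0\<in>I. ip I (W i0) (W i0))" using tot that by simp
    then obtain i0 where i0: "i0 \<in> I" "ip I (W i0) (W i0) > 0"
    proof -
      assume h: "\<And>i0. i0 \<in> I \<Longrightarrow> 0 < ip I (W i0) (W i0) \<Longrightarrow> thesis"
      show thesis
      proof (rule ccontr)
        assume "\<not> thesis"
        hence "\<forall>i0\<in>I. ip I (W i0) (W i0) \<le> 0" using h by force
        hence "(\<Sum>i0\<in>I. ip I (W i0) (W i0)) \<le> 0" by (simp add: sum_nonpos)
        thus False using \<open>0 < (\<Sum>i0\<in>I. ip I (W i0) (W i0))\<close> by simp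
      qed
    qed
    define a where "a = ip I (W i0) (W i0)"
    define w where "w = (\<lambda>i. W i0 i / sqrt a)"
    have "ip I w w = a / (sqrt a * sqrt a)" unfolding w_def a_def ip_def
      by (simp add: sum_divide_distrib[symmetric])
    also have "\<dots> = 1" using i0 a_def by simp
    finally have "ip I w w = 1" .
    moreover have "ip I (v j) w = 0" if "j<p" for j
    proof -
      have "ip I (v j) w = ip I (v j) (W i0) / sqrt a" unfolding w_def ip_def
        by (simp add: sum_divide_distrib[symmetric])
      thus ?thesis using orth[OF that i0(1)] by simp
    qed
    ultimately show ?thesis by blast
  qed
  ultimately show ?thesis by blast
qed



lemma t_lemma:
  fixes b C :: real
  assumes h: "\<forall>t. 2*t*b \<le> t^2*C"
  shows "b = 0"
proof (rule ccontr)
  assume nz: "b \<noteq> 0"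
  define t where "t = b / (\<bar>C\<bar>+1)"
  have pos: "\<bar>C\<bar>+1 > 0" by simp
  define D where "D = \<bar>C\<bar>+1"
  have tD: "t*D = b" using pos unfolding t_def D_def by simp
  have "2*t*b \<le> t^2*C" using h by blast
  hence "D^2*(2*t*b) \<le> D^2*(t^2*C)" by (simp add: mult_left_mono)
  also have "D^2*(2*t*b) = 2*b*(t*D)*D" by (simp add: power2_eq_square)
  also have "D^2*(t^2*C) = (t*D)*(t*D)*C" by (simp add: power2_eq_square)
  finally have "2*b*(t*D)*D \<le> (t*D)*(t*D)*C" .
  hence "2*b*b*D \<le> b*b*C" by (simp only: tD)
  hence "2*b*b*(\<bar>C\<bar>+1) \<le> b*b*C" by (simp add: D_def)
  moreover have "b*b > 0" using nz not_real_square_gt_zero by blast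
  ultimately have "2*(\<bar>C\<bar>+1) \<le> C"
    by (metis mult.commute mult.left_commute mult_le_cancel_left_pos)
  thus False by (smt (verit))
qed

lemma ip_vec: "ip UNIV (\<lambda>i. x$i) (\<lambda>i. y$i) = x \<bullet> (y::real^'d)"
  unfolding ip_def inner_vec_def by simp

lemma orth_count:
  fixes u :: "nat \<Rightarrow> real^'d"
  assumes "orthonormal_cols k u"
  shows "k \<le> CARD('d) \<and> (k < CARD('d) \<longrightarrow> (\<exists>y. norm y = 1 \<and> (\<forall>j<k. u j \<bullet> y = 0)))"
proof -
  have on: "\<forall>j<k. \<forall>l<k. ip UNIV (\<lambda>i. u j $ i) (\<lambda>i. u l $ i) = (if j=l then 1 else 0)"
    using assms unfolding orthonormal_cols_def ip_vec by blast
  have fu: "finite (UNIV::'d set)" by simp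
  note cc = count_complete[OF fu on]
  have "\<exists>y. norm y = 1 \<and> (\<forall>j<k. u j \<bullet> y = 0)" if "k < CARD('d)"
  proof -
    have "\<exists>w. ip UNIV w w = 1 \<and> (\<forall>j<k. ip UNIV (\<lambda>i. u j $ i) w = 0)"
      using cc that by simp
    then obtain w where w: "ip UNIV w w = 1" "\<forall>j<k. ip UNIV (\<lambda>i. u j $ i) w = 0"
      by blast
    define y :: "real^'d" where "y = (\<chi> i. w i)"
    have "y \<bullet> y = 1" using w(1) ip_vec[of y y] by (simp add: y_def)
    hence "norm y = 1" by (simp add: norm_eq_sqrt_inner)
    moreover have "\<forall>j<k. u j \<bullet> y = 0" using w(2) ip_vec[of "u _" y] by (simp add: y_def)
    ultimately show ?thesis by blast
  qed
  thus ?thesis using cc by simp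
qed



definition qf :: "'i set \<Rightarrow> ('i \<Rightarrow> real^'d) \<Rightarrow> real^'d \<Rightarrow> real" where
  "qf I A y = (\<Sum>i\<in>I. (A i \<bullet> y)^2)"
definition Bop :: "'i set \<Rightarrow> ('i \<Rightarrow> real^'d) \<Rightarrow> real^'d \<Rightarrow> real^'d" where
  "Bop I A y = (\<Sum>i\<in>I. (A i \<bullet> y) *\<^sub>R A i)"

lemma inner_Bop: "x \<bullet> Bop I A y = (\<Sum>i\<in>I. (A i \<bullet> x) * (A i \<bullet> y))"
  unfolding Bop_def by (simp add: inner_sum_right inner_commute mult.commute)

lemma Bop_inner: "Bop I A y \<bullet> x = (\<Sum>i\<in>I. (A i \<bullet> x) * (A i \<bullet> y))"
  using inner_Bop[of x I A y] by (simp add: inner_commute)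

lemma qf_Bop: "qf I A y = y \<bullet> Bop I A y"
  unfolding qf_def inner_Bop by (simp add: power2_eq_square)

lemma qf_nonneg: "qf I A y \<ge> 0" unfolding qf_def by (simp add: sum_nonneg)

lemma qf_expand: "qf I A (y + t *\<^sub>R w) = qf I A y + 2*t*(w \<bullet> Bop I A y) + t^2 * qf I A w"
proof -
  have "qf I A (y + t *\<^sub>R w) = (\<Sum>i\<in>I. (A i \<bullet> y)^2 + 2*t*((A i \<bullet> w) * (A i \<bullet> y)) + t^2 * (A i \<bullet> w)^2)"
    unfolding qf_def by (intro sum.cong) (auto simp: inner_add_right power2_eq_square algebra_simps)
  also have "\<dots> = qf I A y + 2*t*(w \<bullet> Bop I A y) + t^2 * qf I A w"
    unfolding qf_def inner_Bop by (simp add: sum.distrib sum_distrib_left)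
  finally show ?thesis .
qed

lemma qf_scale: "qf I A (c *\<^sub>R y) = c^2 * qf I A y"
  unfolding qf_def by (simp add: sum_distrib_left power_mult_distrib mult.commute)

lemma greedy:
  fixes I :: "'i set" and A :: "'i \<Rightarrow> real^'d"
  shows "k \<le> CARD('d) \<Longrightarrow> \<exists>(u::nat\<Rightarrow>real^'d) \<mu>. orthonormal_cols k u \<and>
     (\<forall>j<k. Bop I A (u j) = \<mu> j *\<^sub>R u j) \<and>
     (\<forall>j<k. \<forall>y. norm y = 1 \<and> (\<forall>l<j. u l \<bullet> y = 0) \<longrightarrow> qf I A y \<le> \<mu> j)"
proof (induction k)
  case 0
  show ?case by (auto simp: orthonormal_cols_def)
next
  case (Suc k)
  then obtain u \<mu> where on: "orthonormal_cols k u" and eig: "\<forall>j<k. Bop I A (u j) = \<mu> j *\<^sub>R u j"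
    and mx: "\<forall>j<k. \<forall>y. norm y = 1 \<and> (\<forall>l<j. u l \<bullet> y = 0) \<longrightarrow> qf I A y \<le> \<mu> j" by auto
  have kd: "k < CARD('d)" using Suc by simp
  define K where "K = sphere (0::real^'d) 1 \<inter> (\<Inter>j\<in>{..<k}. {y. u j \<bullet> y = 0})"
  have Kiff: "y \<in> K \<longleftrightarrow> norm y = 1 \<and> (\<forall>j<k. u j \<bullet> y = 0)" for y
    unfolding K_def by auto
  have "compact K" unfolding K_def
    by (intro compact_Int_closed compact_sphere closed_INT ballI closed_hyperplane)
  moreover have "K \<noteq> {}" using orth_count[OF on] kd Kiff by blast
  moreover have "continuous_on K (qf I A)" unfolding qf_def by (intro continuous_intros)
  ultimately obtain ys where ysK: "ys \<in> K" and ysmax: "\<forall>y\<in>K. qf I A y \<le> qf I A ys"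
    using continuous_attains_sup by blast
  define m where "m = qf I A ys"
  have ys1: "norm ys = 1" and ysorth: "\<forall>j<k. u j \<bullet> ys = 0" using ysK Kiff by auto
  have ysys: "ys \<bullet> ys = 1" using ys1 by (simp add: dot_square_norm)
  define w where "w = Bop I A ys - m *\<^sub>R ys"
  have wu: "u j \<bullet> w = 0" if "j<k" for j
  proof -
    have "u j \<bullet> Bop I A ys = ys \<bullet> Bop I A (u j)" unfolding inner_Bop by (simp add: mult.commute)
    also have "\<dots> = \<mu> j * (ys \<bullet> u j)" using eig that by simp
    also have "\<dots> = 0" using ysorth that by (simp add: inner_commute)
    finally show ?thesis unfolding w_def using ysorth that by (simp add: inner_diff_right)
  qed
  have wy: "ys \<bullet> w = 0" unfolding w_def m_def qf_Bop by (simp add: inner_diff_right ysys)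
  have wy': "w \<bullet> ys = 0" using wy by (simp add: inner_commute)
  have quad: "2*t*(w \<bullet> Bop I A ys) \<le> t^2 * (m * (w \<bullet> w) - qf I A w)" for t
  proof -
    define z where "z = ys + t *\<^sub>R w"
    have zz: "z \<bullet> z = 1 + t^2 * (w \<bullet> w)" unfolding z_def
      by (simp add: inner_add_left inner_add_right ysys wy wy' power2_eq_square)
    hence zpos: "z \<bullet> z > 0" by (smt (verit) inner_ge_zero zero_le_power2 mult_nonneg_nonneg)
    define nz where "nz = norm z"
    have nzpos: "nz > 0" using zpos unfolding nz_def by (metis inner_zero_left zero_less_norm_iff order.irrefl)
    have nz2: "nz^2 = z \<bullet> z" unfolding nz_def by (simp add: dot_square_norm)
    have "(1/nz) *\<^sub>R z \<in> K" unfolding Kiff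
    proof
      show "norm ((1/nz) *\<^sub>R z) = 1" using nzpos unfolding nz_def by simp
      show "\<forall>j<k. u j \<bullet> (1/nz) *\<^sub>R z = 0" unfolding z_def using ysorth wu
        by (simp add: inner_add_right)
    qed
    hence "qf I A ((1/nz) *\<^sub>R z) \<le> m" using ysmax m_def by blast
    hence "qf I A z / nz^2 \<le> m" unfolding qf_scale by (simp add: power_divide)
    hence "qf I A z \<le> m * nz^2" using nzpos by (simp add: divide_le_eq)
    hence "qf I A ys + 2*t*(w \<bullet> Bop I A ys) + t^2 * qf I A w \<le> m * (1 + t^2 * (w \<bullet> w))"
      unfolding nz2 zz by (simp add: z_def qf_expand)
    thus ?thesis unfolding m_def by (simp add: algebra_simps)
  qed
  have "w \<bullet> Bop I A ys = 0"
    by (rule t_lemma[where C = "m * (w \<bullet> w) - qf I A w"]) (use quad in blast)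
  moreover have "ys \<bullet> Bop I A ys = m" unfolding m_def qf_Bop ..
  ultimately have "w \<bullet> w = 0" unfolding w_def using ysys
    by (simp add: inner_diff_left inner_diff_right inner_commute)
  hence eigys: "Bop I A ys = m *\<^sub>R ys" unfolding w_def by simp
  define u' where "u' = u(k := ys)"
  define \<mu>' where "\<mu>' = \<mu>(k := m)"
  have "orthonormal_cols (Suc k) u'"
    using on ysorth ysys unfolding orthonormal_cols_def u'_def
    by (auto simp: less_Suc_eq inner_commute)
  moreover have "\<forall>j<Suc k. Bop I A (u' j) = \<mu>' j *\<^sub>R u' j"
    using eig eigys unfolding u'_def \<mu>'_def by (auto simp: less_Suc_eq)
  moreover have "\<forall>j<Suc k. \<forall>y. norm y = 1 \<and> (\<forall>l<j. u' l \<bullet> y = 0) \<longrightarrow> qf I A y \<le> \<mu>' j"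
  proof (intro allI impI)
    fix j y assume j: "j < Suc k" and y: "norm y = 1 \<and> (\<forall>l<j. u' l \<bullet> y = 0)"
    show "qf I A y \<le> \<mu>' j"
    proof (cases "j = k")
      case True
      hence "y \<in> K" using y Kiff unfolding u'_def by auto
      thus ?thesis using ysmax True unfolding \<mu>'_def m_def by simp
    next
      case False
      hence "j < k" using j by simp
      thus ?thesis using mx y False unfolding u'_def \<mu>'_def by auto
    qed
  qed
  ultimately show ?case by blast
qed



lemma ortho_extend:
  assumes fin: "finite I"
    and on: "\<forall>j<p. \<forall>l<p. ip I (v j) (v l) = (if j=l then 1 else 0)"
    and pq: "p \<le> q" and qN: "q \<le> card I"
  shows "\<exists>v'. (\<forall>j<q. \<forall>l<q. ip I (v' j) (v' l) = (if j=l then 1 else 0)) \<and> (\<forall>j<p. v' j = v j)"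
  using pq
proof (induction q rule: dec_induct)
  case base
  show ?case using on by blast
next
  case (step n)
  then obtain v' where on': "\<forall>j<n. \<forall>l<n. ip I (v' j) (v' l) = (if j=l then 1 else 0)"
    and ag: "\<forall>j<p. v' j = v j" by blast
  have "n < card I" using step qN by simp
  then obtain w where w: "ip I w w = 1" "\<forall>j<n. ip I (v' j) w = 0"
    using count_complete[OF fin on'] by blast
  define v'' where "v'' = v'(n := w)"
  have "\<forall>j<Suc n. \<forall>l<Suc n. ip I (v'' j) (v'' l) = (if j=l then 1 else 0)"
    using on' w unfolding v''_def by (auto simp: less_Suc_eq ip_comm)
  moreover have "\<forall>j<p. v'' j = v j" using ag step unfolding v''_def by auto
  ultimately show ?case by blast
qed

lemma svd_exists:
  fixes I :: "'i set" and A :: "'i \<Rightarrow> real^'d"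
  assumes fin: "finite I"
  shows "\<exists>s. is_svd I A s"
proof -
  define d where "d = CARD('d)"
  define N where "N = card I"
  define r where "r = min d N"
  obtain u \<mu> where on: "orthonormal_cols d u" and eig: "\<forall>j<d. Bop I A (u j) = \<mu> j *\<^sub>R u j"
    and mx: "\<forall>j<d. \<forall>y. norm y = 1 \<and> (\<forall>l<j. u l \<bullet> y = 0) \<longrightarrow> qf I A y \<le> \<mu> j"
    using greedy[of d I A] d_def by auto
  have uu: "u j \<bullet> u l = (if j = l then 1 else 0)" if "j<d" "l<d" for j l
    using on that unfolding orthonormal_cols_def by blast
  have un: "norm (u j) = 1" if "j<d" for j
    using uu[OF that that] by (simp add: norm_eq_sqrt_inner)
  have qmu: "qf I A (u j) = \<mu> j" if "j<d" for j
    using eig that uu[OF that that] by (simp add: qf_Bop)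
  have mu0: "\<mu> j \<ge> 0" if "j<d" for j using qmu[OF that] qf_nonneg by metis
  have mono: "\<mu> l \<le> \<mu> j" if "j \<le> l" "l < d" for j l
  proof -
    have "norm (u l) = 1 \<and> (\<forall>l'<j. u l' \<bullet> u l = 0)" using un uu that by auto
    hence "qf I A (u l) \<le> \<mu> j" using mx that by auto
    thus ?thesis using qmu that by simp
  qed
  have expand: "x = (\<Sum>j<d. (u j \<bullet> x) *\<^sub>R u j)" for x
  proof (rule ccontr)
    assume ne: "x \<noteq> (\<Sum>j<d. (u j \<bullet> x) *\<^sub>R u j)"
    define y where "y = x - (\<Sum>j<d. (u j \<bullet> x) *\<^sub>R u j)"
    have yne: "y \<noteq> 0" using ne unfolding y_def by simp
    have yo: "u l \<bullet> y = 0" if "l<d" for l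
    proof -
      have "u l \<bullet> (\<Sum>j<d. (u j \<bullet> x) *\<^sub>R u j) = (\<Sum>j<d. (u j \<bullet> x) * (if l = j then 1 else 0))"
        unfolding inner_sum_right using uu that by (intro sum.cong) auto
      also have "\<dots> = u l \<bullet> x" using that by (simp add: if_distrib cong: if_cong)
      finally show ?thesis unfolding y_def by (simp add: inner_diff_right)
    qed
    define u' where "u' = u(d := (1/norm y) *\<^sub>R y)"
    have "orthonormal_cols (Suc d) u'"
      unfolding orthonormal_cols_def u'_def using uu yo yne
      by (auto simp: less_Suc_eq inner_commute dot_square_norm power2_eq_square)
    thus False using orth_count[of "Suc d" u'] d_def by simp
  qed
  define p where "p = (if \<exists>j<d. \<mu> j = 0 then (LEAST j. j<d \<and> \<mu> j = 0) else d)"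
  have pd: "p \<le> d" unfolding p_def
    by (auto intro: Least_le[THEN order_trans] dest: LeastI_ex order.strict_implies_order)
  have pos: "\<mu> j > 0" if "j<p" for j
  proof -
    have jd: "j<d" using that pd by simp
    have "\<mu> j \<noteq> 0"
    proof
      assume "\<mu> j = 0"
      hence "p \<le> j" unfolding p_def using jd by (auto intro: Least_le)
      thus False using that by simp
    qed
    thus ?thesis using mu0[OF jd] by simp
  qed
  have zero: "\<mu> j = 0" if "p \<le> j" "j < d" for j
  proof -
    have ex: "\<exists>j<d. \<mu> j = 0" using that pd unfolding p_def by (auto split: if_splits)
    hence "p < d \<and> \<mu> p = 0" unfolding p_def using LeastI_ex[of "\<lambda>j. j<d \<and> \<mu> j = 0"] by auto
    thus ?thesis using mono[of p j] that mu0[of j] by simp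
  qed
  have Az: "A i \<bullet> u j = 0" if "i\<in>I" "p \<le> j" "j<d" for i j
  proof -
    have "(\<Sum>i\<in>I. (A i \<bullet> u j)^2) = 0" using qmu[of j] zero[of j] that unfolding qf_def by simp
    hence "\<forall>i\<in>I. (A i \<bullet> u j)^2 = 0" using fin by (simp add: sum_nonneg_eq_0_iff)
    thus ?thesis using that by simp
  qed
  define v where "v j = (\<lambda>i. (A i \<bullet> u j) / sqrt (\<mu> j))" for j
  have von: "\<forall>j<p. \<forall>l<p. ip I (v j) (v l) = (if j=l then 1 else 0)"
  proof (intro allI impI)
    fix j l assume jl: "j<p" "l<p"
    have "ip I (v j) (v l) = (u j \<bullet> Bop I A (u l)) / (sqrt (\<mu> j) * sqrt (\<mu> l))"
      unfolding ip_def v_def inner_Bop by (simp add: sum_divide_distrib)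
    also have "\<dots> = \<mu> l * (u j \<bullet> u l) / (sqrt (\<mu> j) * sqrt (\<mu> l))"
      using eig jl pd by simp
    also have "\<dots> = (if j=l then 1 else 0)"
      using uu[of j l] jl pd pos[of j] pos[of l] by (auto simp: real_sqrt_mult[symmetric])
    finally show "ip I (v j) (v l) = (if j=l then 1 else 0)" .
  qed
  have pN: "p \<le> N" using count_complete[OF fin von] N_def by simp
  have pr: "p \<le> r" using pN pd r_def by simp
  obtain v' where v'on: "\<forall>j<r. \<forall>l<r. ip I (v' j) (v' l) = (if j=l then 1 else 0)"
    and v'ag: "\<forall>j<p. v' j = v j"
    using ortho_extend[OF fin von pr] r_def N_def by auto
  define s where "s j = (if j < r then sqrt (\<mu> j) else 0)" for j
  have rd: "r \<le> d" using r_def by simp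
  have recon: "A i = (\<Sum>j<r. (s j * v' j i) *\<^sub>R u j)" if "i\<in>I" for i
  proof -
    have "A i = (\<Sum>j<d. (u j \<bullet> A i) *\<^sub>R u j)" by (rule expand)
    also have "\<dots> = (\<Sum>j<p. (u j \<bullet> A i) *\<^sub>R u j)"
      using pd Az[OF that] by (intro sum.mono_neutral_right) (auto simp: inner_commute)
    also have "\<dots> = (\<Sum>j<p. (s j * v' j i) *\<^sub>R u j)"
    proof (intro sum.cong refl)
      fix j assume "j \<in> {..<p}"
      hence j: "j<p" by simp
      hence "s j * v' j i = u j \<bullet> A i" using pr pos[OF j] v'ag unfolding s_def v_def
        by (simp add: inner_commute)
      thus "(u j \<bullet> A i) *\<^sub>R u j = (s j * v' j i) *\<^sub>R u j" by simp
    qed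
    also have "\<dots> = (\<Sum>j<r. (s j * v' j i) *\<^sub>R u j)"
      using pr rd zero unfolding s_def by (intro sum.mono_neutral_left) auto
    finally show ?thesis .
  qed
  have "is_svd I A s"
    unfolding is_svd_def Let_def
  proof (intro conjI)
    show "\<exists>(u :: nat \<Rightarrow> real^'d) (v :: nat \<Rightarrow> 'i \<Rightarrow> real).
          (\<forall>j<min CARD('d) (card I). \<forall>l<min CARD('d) (card I). u j \<bullet> u l = (if j = l then 1 else 0)) \<and>
          (\<forall>j<min CARD('d) (card I). \<forall>l<min CARD('d) (card I). (\<Sum>i\<in>I. v j i * v l i) = (if j = l then 1 else 0)) \<and>
          (\<forall>i\<in>I. A i = (\<Sum>j<min CARD('d) (card I). (s j * v j i) *\<^sub>R u j))"
      apply (rule exI[of _ u], rule exI[of _ v'])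
      using uu rd v'on recon unfolding r_def d_def N_def ip_def by auto
    show "\<forall>j<min CARD('d) (card I). 0 \<le> s j" unfolding s_def using mu0 unfolding d_def by auto
    show "\<forall>j l. j \<le> l \<longrightarrow> l < min CARD('d) (card I) \<longrightarrow> s l \<le> s j"
      unfolding s_def using mono rd unfolding r_def d_def N_def by auto
    show "\<forall>j\<ge>min CARD('d) (card I). s j = 0" unfolding s_def r_def d_def N_def by auto
  qed
  thus ?thesis by blast
qed



lemma on_inner_single:
  fixes u :: "nat \<Rightarrow> real^'d"
  assumes "orthonormal_cols k u" "l < k"
  shows "u l \<bullet> (\<Sum>j<k. a j *\<^sub>R u j) = a l"
proof -
  have "u l \<bullet> (\<Sum>j<k. a j *\<^sub>R u j) = (\<Sum>j<k. a j * (if l = j then 1 else 0))"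
    unfolding inner_sum_right using assms unfolding orthonormal_cols_def by (intro sum.cong) auto
  also have "\<dots> = a l" using assms(2) by (simp add: if_distrib cong: if_cong)
  finally show ?thesis .
qed

lemma on_inner_sum:
  fixes u :: "nat \<Rightarrow> real^'d"
  assumes "orthonormal_cols k u"
  shows "(\<Sum>j<k. a j *\<^sub>R u j) \<bullet> (\<Sum>j<k. b j *\<^sub>R u j) = (\<Sum>j<k. a j * b j)"
proof -
  have "(\<Sum>j<k. a j *\<^sub>R u j) \<bullet> (\<Sum>j<k. b j *\<^sub>R u j) = (\<Sum>j<k. a j * (u j \<bullet> (\<Sum>l<k. b l *\<^sub>R u l)))"
    by (simp add: inner_sum_left)
  also have "\<dots> = (\<Sum>j<k. a j * b j)"
    using on_inner_single[OF assms] by (intro sum.cong) auto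
  finally show ?thesis .
qed

definition inD :: "nat \<Rightarrow> (nat \<Rightarrow> real^'d) \<Rightarrow> real^'d \<Rightarrow> bool" where
  "inD k U y \<longleftrightarrow> y = (\<Sum>j<k. (U j \<bullet> y) *\<^sub>R U j)"

lemma inD_comb: "inD k U (\<Sum>j<k. a j *\<^sub>R U j)" if "orthonormal_cols k U"
  unfolding inD_def using on_inner_single[OF that] by simp

definition Lres :: "nat \<Rightarrow> (nat \<Rightarrow> real^'d) \<Rightarrow> real^'d \<Rightarrow> real^'d" where
  "Lres k U y = y - (\<Sum>j<k. (U j \<bullet> y) *\<^sub>R U j)"

lemma inD_Lres: "inD k U y \<longleftrightarrow> Lres k U y = 0"
  unfolding inD_def Lres_def by simp

lemma Lres_add: "Lres k U (x + y) = Lres k U x + Lres k U y"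
  unfolding Lres_def by (simp add: inner_add_right scaleR_add_left sum.distrib algebra_simps)

lemma Lres_scale: "Lres k U (c *\<^sub>R x) = c *\<^sub>R Lres k U x"
  unfolding Lres_def by (simp add: scaleR_diff_right scaleR_sum_right)

lemma Lres_diff: "Lres k U (x - y) = Lres k U x - Lres k U y"
  using Lres_add[of k U "x - y" y] by simp

lemma Lres_sum: "Lres k U (\<Sum>i\<in>J. c i *\<^sub>R y i) = (\<Sum>i\<in>J. c i *\<^sub>R Lres k U (y i))"
proof (induction J rule: infinite_finite_induct)
  case (infinite A) thus ?case by (simp add: Lres_def)
next
  case empty thus ?case by (simp add: Lres_def)
next
  case (insert a A) thus ?case by (simp add: Lres_add Lres_scale)
qed

lemma inD_lin:
  assumes "\<forall>i\<in>J. inD k U (y i)"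
  shows "inD k U (\<Sum>i\<in>J. c i *\<^sub>R y i)"
  using assms unfolding inD_Lres Lres_sum by simp

lemma inD_diff: "inD k U x \<Longrightarrow> inD k U y \<Longrightarrow> inD k U (x - y)"
  unfolding inD_Lres Lres_diff by simp

lemma inD_scale: "inD k U x \<Longrightarrow> inD k U (c *\<^sub>R x)"
  unfolding inD_Lres Lres_scale by simp

lemma inD_inner:
  assumes "orthonormal_cols k U" "inD k U x" "inD k U y"
  shows "x \<bullet> y = ip {..<k} (\<lambda>j. U j \<bullet> x) (\<lambda>j. U j \<bullet> y)"
proof -
  have "x \<bullet> y = (\<Sum>j<k. (U j \<bullet> x) *\<^sub>R U j) \<bullet> (\<Sum>j<k. (U j \<bullet> y) *\<^sub>R U j)"
    using assms(2,3) unfolding inD_def by simp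
  also have "\<dots> = ip {..<k} (\<lambda>j. U j \<bullet> x) (\<lambda>j. U j \<bullet> y)"
    unfolding on_inner_sum[OF assms(1)] ip_def ..
  finally show ?thesis .
qed

lemma inD_count:
  fixes u :: "nat \<Rightarrow> real^'d"
  assumes "orthonormal_cols k U" "orthonormal_cols p u" "\<forall>j<p. inD k U (u j)"
  shows "p \<le> k"
proof -
  have "\<forall>j<p. \<forall>l<p. ip {..<k} (\<lambda>i. U i \<bullet> u j) (\<lambda>i. U i \<bullet> u l) = (if j=l then 1 else 0)"
    using assms inD_inner[OF assms(1)] unfolding orthonormal_cols_def by metis
  from count_complete[OF _ this] show ?thesis by simp
qed



lemma on_restrict: "orthonormal_cols r u \<Longrightarrow> k \<le> r \<Longrightarrow> orthonormal_cols k u"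
  unfolding orthonormal_cols_def by auto

lemma svd_repr:
  fixes T :: "'i set" and Af :: "'i \<Rightarrow> real^'d" and Us :: "nat \<Rightarrow> real^'d"
  assumes fin: "finite T"
    and svd: "is_svd T Af s"
    and kk: "kk \<ge> 1"
    and sig: "\<sigma> > 0" and sk: "s (kk - 1) \<ge> \<sigma>"
    and onU: "orthonormal_cols kk Us"
    and AD: "\<forall>i\<in>T. inD kk Us (Af i)"
    and sum0: "(\<Sum>i\<in>T. Af i) = 0"
    and xD: "inD kk Us x"
  shows "\<exists>lam. x = (\<Sum>i\<in>T. lam i *\<^sub>R Af i) \<and> (\<Sum>i\<in>T. lam i) = 0 \<and>
           (\<Sum>i\<in>T. (lam i)^2) \<le> (norm x)^2 / \<sigma>^2"
proof -
  define r where "r = min CARD('d) (card T)"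
  obtain u :: "nat \<Rightarrow> real^'d" and v :: "nat \<Rightarrow> 'i \<Rightarrow> real" where
    uon0: "\<forall>j<r. \<forall>l<r. u j \<bullet> u l = (if j = l then 1 else 0)" and
    von: "\<forall>j<r. \<forall>l<r. (\<Sum>i\<in>T. v j i * v l i) = (if j = l then 1 else 0)" and
    recon: "\<forall>i\<in>T. Af i = (\<Sum>j<r. (s j * v j i) *\<^sub>R u j)" and
    snn: "\<forall>j<r. 0 \<le> s j" and smono: "\<forall>j l. j \<le> l \<longrightarrow> l < r \<longrightarrow> s l \<le> s j" and
    szero: "\<forall>j\<ge>r. s j = 0"
    using svd unfolding is_svd_def Let_def r_def by blast
  have uon: "orthonormal_cols r u" using uon0 unfolding orthonormal_cols_def by blast
  have kr: "kk \<le> r"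
  proof (rule ccontr)
    assume "\<not> kk \<le> r" hence "kk - 1 \<ge> r" by simp
    hence "s (kk - 1) = 0" using szero by blast
    thus False using sk sig by simp
  qed
  have sj: "s j \<ge> \<sigma>" if "j < kk" for j
  proof -
    have "j \<le> kk - 1" "kk - 1 < r" using that kr kk by auto
    hence "s (kk - 1) \<le> s j" using smono by blast
    thus ?thesis using sk by simp
  qed
  have spos: "s j > 0" if "j < kk" for j using sj[OF that] sig by simp
  have uonk: "orthonormal_cols kk u" using on_restrict[OF uon kr] .
  have uA: "u j \<bullet> Af i = s j * v j i" if "j < r" "i \<in> T" for i j
    using recon that on_inner_single[OF uon that(1), of "\<lambda>j. s j * v j i"] by simp
  have vsum: "(\<Sum>i\<in>T. v j i *\<^sub>R Af i) = s j *\<^sub>R u j" if "j < r" for j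
  proof -
    have "(\<Sum>i\<in>T. v j i *\<^sub>R Af i) = (\<Sum>i\<in>T. \<Sum>l<r. (v j i * (s l * v l i)) *\<^sub>R u l)"
      using recon by (intro sum.cong refl) (simp add: scaleR_sum_right)
    also have "\<dots> = (\<Sum>l<r. \<Sum>i\<in>T. (v j i * (s l * v l i)) *\<^sub>R u l)" by (rule sum.swap)
    also have "\<dots> = (\<Sum>l<r. (s l * (\<Sum>i\<in>T. v j i * v l i)) *\<^sub>R u l)"
      by (intro sum.cong refl) (simp add: scaleR_sum_left[symmetric] sum_distrib_left mult.left_commute)
    also have "\<dots> = (\<Sum>l<r. if l = j then s j *\<^sub>R u j else 0)"
      using von that by (intro sum.cong refl) auto
    also have "\<dots> = s j *\<^sub>R u j" using that by simp
    finally show ?thesis .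
  qed
  have uD: "inD kk Us (u j)" if "j < kk" for j
  proof -
    have "u j = (1 / s j) *\<^sub>R (\<Sum>i\<in>T. v j i *\<^sub>R Af i)"
      using vsum[of j] that kr spos[OF that] by simp
    thus ?thesis using inD_scale[OF inD_lin[OF AD]] by metis
  qed
  have xexp: "x = (\<Sum>j<kk. (u j \<bullet> x) *\<^sub>R u j)"
  proof (rule ccontr)
    assume ne: "x \<noteq> (\<Sum>j<kk. (u j \<bullet> x) *\<^sub>R u j)"
    define y where "y = x - (\<Sum>j<kk. (u j \<bullet> x) *\<^sub>R u j)"
    have yne: "y \<noteq> 0" using ne unfolding y_def by simp
    have yD: "inD kk Us y" unfolding y_def
      by (rule inD_diff[OF xD inD_lin]) (use uD in auto)
    have yo: "u l \<bullet> y = 0" if "l<kk" for l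
      unfolding y_def inner_diff_right on_inner_single[OF uonk that] by simp
    define u' where "u' = u(kk := (1/norm y) *\<^sub>R y)"
    have "orthonormal_cols (Suc kk) u'"
      using uonk yo yne unfolding orthonormal_cols_def u'_def
      by (auto simp: less_Suc_eq inner_commute dot_square_norm power2_eq_square)
    moreover have "\<forall>j<Suc kk. inD kk Us (u' j)"
      unfolding u'_def using uD inD_scale[OF yD] by (auto simp: less_Suc_eq)
    ultimately have "Suc kk \<le> kk" using inD_count[OF onU] by blast
    thus False by simp
  qed
  define c where "c j = (u j \<bullet> x) / s j" for j
  define lam where "lam = (\<lambda>i. \<Sum>j<kk. c j * v j i)"
  have A1: "x = (\<Sum>i\<in>T. lam i *\<^sub>R Af i)"
  proof -
    have "(\<Sum>i\<in>T. lam i *\<^sub>R Af i) = (\<Sum>i\<in>T. \<Sum>j<kk. c j *\<^sub>R (v j i *\<^sub>R Af i))"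
      unfolding lam_def by (simp add: scaleR_sum_left)
    also have "\<dots> = (\<Sum>j<kk. c j *\<^sub>R (\<Sum>i\<in>T. v j i *\<^sub>R Af i))"
      by (subst sum.swap) (simp add: scaleR_sum_right)
    also have "\<dots> = (\<Sum>j<kk. (u j \<bullet> x) *\<^sub>R u j)"
    proof (intro sum.cong refl)
      fix j assume "j \<in> {..<kk}"
      hence j: "j < kk" by simp
      have "s j > 0" using spos[OF j] .
      thus "c j *\<^sub>R (\<Sum>i\<in>T. v j i *\<^sub>R Af i) = (u j \<bullet> x) *\<^sub>R u j"
        using vsum[of j] j kr unfolding c_def by simp
    qed
    finally show ?thesis using xexp by simp
  qed
  have vs0: "(\<Sum>i\<in>T. v j i) = 0" if "j < kk" for j
  proof -
    have "s j * (\<Sum>i\<in>T. v j i) = (\<Sum>i\<in>T. u j \<bullet> Af i)"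
      using uA that kr by (simp add: sum_distrib_left)
    also have "\<dots> = u j \<bullet> (\<Sum>i\<in>T. Af i)" by (simp add: inner_sum_right)
    finally show ?thesis using sum0 spos[OF that] by simp
  qed
  have A2: "(\<Sum>i\<in>T. lam i) = 0"
  proof -
    have "(\<Sum>i\<in>T. lam i) = (\<Sum>j<kk. c j * (\<Sum>i\<in>T. v j i))"
      unfolding lam_def by (subst sum.swap) (simp add: sum_distrib_left)
    thus ?thesis using vs0 by simp
  qed
  have ipv: "ip T (v l) (v j) = (if l = j then 1 else 0)" if "l<kk" "j<kk" for l j
    using von that kr unfolding ip_def by auto
  have lamv: "ip T (v l) lam = c l" if "l < kk" for l
  proof -
    have "ip T (v l) lam = (\<Sum>j<kk. c j * ip T (v l) (v j))"
      unfolding lam_def ip_sum_right ..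
    also have "\<dots> = (\<Sum>j<kk. c j * (if l = j then 1 else 0))"
      using ipv that by (intro sum.cong refl) auto
    also have "\<dots> = c l" using that by (simp add: if_distrib cong: if_cong)
    finally show ?thesis .
  qed
  have "(\<Sum>i\<in>T. (lam i)^2) = ip T lam lam" unfolding ip_def by (simp add: power2_eq_square)
  also have "\<dots> = (\<Sum>j<kk. c j * ip T lam (v j))"
    by (subst (2) lam_def) (simp only: ip_sum_right)
  also have "\<dots> = (\<Sum>j<kk. (c j)^2)"
    using lamv by (intro sum.cong refl) (auto simp: ip_comm power2_eq_square)
  also have "\<dots> \<le> (\<Sum>j<kk. (u j \<bullet> x)^2 / \<sigma>^2)"
  proof (intro sum_mono)
    fix j assume "j \<in> {..<kk}"
    hence j: "j < kk" by simp
    have "(c j)^2 = (u j \<bullet> x)^2 / (s j)^2" unfolding c_def by (simp add: power_divide)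
    also have "\<dots> \<le> (u j \<bullet> x)^2 / \<sigma>^2"
      using sj[OF j] sig by (intro divide_left_mono power_mono) auto
    finally show "(c j)^2 \<le> (u j \<bullet> x)^2 / \<sigma>^2" .
  qed
  also have "\<dots> = (norm x)^2 / \<sigma>^2"
  proof -
    have "(norm x)^2 = x \<bullet> x" by (simp add: dot_square_norm)
    also have "\<dots> = (\<Sum>j<kk. (u j \<bullet> x) *\<^sub>R u j) \<bullet> (\<Sum>j<kk. (u j \<bullet> x) *\<^sub>R u j)"
      using xexp by simp
    also have "\<dots> = (\<Sum>j<kk. (u j \<bullet> x)^2)" unfolding on_inner_sum[OF uonk] by (simp add: power2_eq_square)
    finally show ?thesis by (simp add: sum_divide_distrib)
  qed
  finally show ?thesis using A1 A2 by blast
qed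



lemma Lres_norm_sq:
  fixes U :: "nat \<Rightarrow> real^'d"
  assumes "orthonormal_cols k U"
  shows "(norm (Lres k U v))^2 = (norm v)^2 - (\<Sum>j<k. (U j \<bullet> v)^2)"
proof -
  define P where "P = (\<Sum>j<k. (U j \<bullet> v) *\<^sub>R U j)"
  have PP: "P \<bullet> P = (\<Sum>j<k. (U j \<bullet> v)^2)" unfolding P_def on_inner_sum[OF assms]
    by (simp add: power2_eq_square)
  have vP: "v \<bullet> P = (\<Sum>j<k. (U j \<bullet> v)^2)" unfolding P_def
    by (simp add: inner_sum_right power2_eq_square inner_commute)
  have "(norm (Lres k U v))^2 = (v - P) \<bullet> (v - P)" unfolding Lres_def P_def by (simp add: dot_square_norm)
  also have "\<dots> = v \<bullet> v - 2 * (v \<bullet> P) + P \<bullet> P" by (simp add: inner_diff_left inner_diff_right inner_commute)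
  finally show ?thesis using PP vP by (simp add: dot_square_norm)
qed

lemma Lres_norm_le:
  fixes U :: "nat \<Rightarrow> real^'d"
  assumes "orthonormal_cols k U"
  shows "norm (Lres k U v) \<le> norm v"
proof -
  have "(norm (Lres k U v))^2 \<le> (norm v)^2" unfolding Lres_norm_sq[OF assms]
    by (simp add: sum_nonneg)
  thus ?thesis by (simp add: power2_le_iff_abs_le)
qed

definition Pk :: "nat \<Rightarrow> (nat \<Rightarrow> real^'d) \<Rightarrow> real^'d \<Rightarrow> real^'d" where
  "Pk k U v = (\<Sum>j<k. (U j \<bullet> v) *\<^sub>R U j)"

lemma Pk_norm_le:
  fixes U :: "nat \<Rightarrow> real^'d"
  assumes "orthonormal_cols k U"
  shows "norm (Pk k U v) \<le> norm v"
proof -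
  have "(norm (Pk k U v))^2 = (\<Sum>j<k. (U j \<bullet> v)^2)" unfolding Pk_def dot_square_norm[symmetric]
    on_inner_sum[OF assms] by (simp add: power2_eq_square)
  also have "\<dots> \<le> (norm v)^2" using Lres_norm_sq[OF assms, of v] by (smt (verit) zero_le_power2)
  finally show ?thesis by (simp add: power2_le_iff_abs_le)
qed

lemma aff_proj_diff: "aff_proj k U m a - aff_proj k U m b = Pk k U (a - b)"
  unfolding aff_proj_def Pk_def by (simp add: inner_diff_right scaleR_diff_left sum_subtractf)

lemma aff_res: "w - aff_proj k U m w = Lres k U (w - m)"
  unfolding aff_proj_def Lres_def by simp

lemma spec_le:
  fixes A :: "'i \<Rightarrow> real^'d"
  assumes fin: "finite J"
  shows "(spec_norm J A)^2 \<le> (\<Sum>z\<in>J. (norm (A z))^2)"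
proof -
  define F where "F = (\<Sum>z\<in>J. (norm (A z))^2)"
  define X where "X = {norm (\<Sum>i\<in>J. x i *\<^sub>R A i) | x. (\<Sum>i\<in>J. (x i)\<^sup>2) \<le> 1}"
  have F0: "F \<ge> 0" unfolding F_def by (simp add: sum_nonneg)
  have bnd: "t \<le> sqrt F" if "t \<in> X" for t
  proof -
    obtain x where t: "t = norm (\<Sum>i\<in>J. x i *\<^sub>R A i)" and x: "(\<Sum>i\<in>J. (x i)\<^sup>2) \<le> 1"
      using \<open>t \<in> X\<close> unfolding X_def by blast
    have "t \<le> (\<Sum>i\<in>J. \<bar>x i\<bar> * norm (A i))" unfolding t
      using norm_sum[of "\<lambda>i. x i *\<^sub>R A i" J] by simp
    moreover have "(\<Sum>i\<in>J. \<bar>x i\<bar> * norm (A i))^2 \<le> (\<Sum>i\<in>J. (\<bar>x i\<bar>)^2) * (\<Sum>i\<in>J. (norm (A i))^2)"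
      by (rule Cauchy_Schwarz_ineq_sum)
    moreover have "(\<Sum>i\<in>J. (\<bar>x i\<bar>)^2) * F \<le> 1 * F" using x F0 by (intro mult_right_mono) auto
    ultimately have "(\<Sum>i\<in>J. \<bar>x i\<bar> * norm (A i))^2 \<le> F" unfolding F_def by simp
    hence "(\<Sum>i\<in>J. \<bar>x i\<bar> * norm (A i)) \<le> sqrt F" by (simp add: real_le_rsqrt)
    thus ?thesis using \<open>t \<le> _\<close> by simp
  qed
  have "0 \<in> X" unfolding X_def by (rule CollectI, rule exI[of _ "\<lambda>_. 0"]) simp
  hence ne: "X \<noteq> {}" by blast
  have "Sup X \<le> sqrt F" using ne bnd by (intro cSup_least) auto
  moreover have "0 \<le> Sup X" using \<open>0 \<in> X\<close> bnd by (intro cSup_upper2[of 0]) (auto simp: bdd_above_def)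
  ultimately have "(Sup X)^2 \<le> (sqrt F)^2" by (intro power_mono) auto
  thus ?thesis using F0 unfolding spec_norm_def X_def[symmetric] F_def by simp
qed

lemma sum_sq_bound:
  fixes a :: "'i \<Rightarrow> real" and w :: "'i \<Rightarrow> real^'d"
  shows "(norm (\<Sum>i\<in>T. a i *\<^sub>R w i))^2 \<le> (\<Sum>i\<in>T. (a i)^2) * (\<Sum>i\<in>T. (norm (w i))^2)"
proof -
  have "norm (\<Sum>i\<in>T. a i *\<^sub>R w i) \<le> (\<Sum>i\<in>T. \<bar>a i\<bar> * norm (w i))"
    using norm_sum[of "\<lambda>i. a i *\<^sub>R w i" T] by simp
  hence "(norm (\<Sum>i\<in>T. a i *\<^sub>R w i))^2 \<le> (\<Sum>i\<in>T. \<bar>a i\<bar> * norm (w i))^2"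
    by (intro power_mono) auto
  also have "\<dots> \<le> (\<Sum>i\<in>T. (\<bar>a i\<bar>)^2) * (\<Sum>i\<in>T. (norm (w i))^2)" by (rule Cauchy_Schwarz_ineq_sum)
  finally show ?thesis by simp
qed

lemma norm_diff_sq_le: "(norm (a - b :: real^'d))^2 \<le> 2 * (norm a)^2 + 2 * (norm b)^2"
proof -
  have "norm (a - b) \<le> norm a + norm b" by (rule norm_triangle_ineq4)
  hence "(norm (a - b))^2 \<le> (norm a + norm b)^2" by (intro power_mono) auto
  also have "\<dots> \<le> 2 * (norm a)^2 + 2 * (norm b)^2"
    by (smt (verit) power2_eq_square sum_squares_bound zero_le_power2 power2_sum)
  finally show ?thesis .
qed

lemma norm_add_sq_le: "(norm (a + b :: real^'d))^2 \<le> 2 * (norm a)^2 + 2 * (norm b)^2"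
  using norm_diff_sq_le[of a "-b"] by simp



lemma aff_inD:
  assumes "y \<in> aff_sub k U m" "orthonormal_cols k U"
  shows "inD k U (y - m)"
proof -
  obtain lam where "y = (\<Sum>j<k. lam j *\<^sub>R U j) + m" using assms(1) unfolding aff_sub_def by blast
  thus ?thesis using inD_comb[OF assms(2)] by simp
qed

lemma vec_of_nat_mult: "(of_nat n :: real^'d) * x = real n *\<^sub>R x"
  by (simp add: vec_eq_iff of_nat_index)

lemma part1:
  fixes n f c :: nat
    and H :: "nat set"
    and Eg :: "nat \<Rightarrow> real^'d"
    and Egam :: "nat \<Rightarrow> real^'d"
    and Ustar :: "nat \<Rightarrow> real^'d" and mstar :: "real^'d"
    and \<delta> \<delta>s \<sigma> :: real
    and g gam :: "nat \<Rightarrow> real^'d" and U :: "nat \<Rightarrow> real^'d" and m :: "real^'d"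
  assumes c_ge: "c \<ge> 2"
    and n_ge: "n \<ge> 2 * f + 1"
    and H_sub: "H \<subseteq> {1..n}" and B_card: "card ({1..n} - H) \<le> f"
    and A_sub_ortho: "orthonormal_cols (c - 1) Ustar"
    and A_sub: "\<forall>i\<in>H. Eg i \<in> aff_sub (c - 1) Ustar mstar"
    and A_outer: "\<forall>i\<in>H. norm (Eg i - (1 / real (card H)) *\<^sub>R (\<Sum>i'\<in>H. Eg i')) \<le> \<delta>"
    and sigma_pos: "\<sigma> > 0"
    and A_sing: "\<forall>S. S \<subseteq> H \<and> card S = n - 2 * f \<longrightarrow>
        sing_val (c - 1) S
          (\<lambda>s. Eg s - (1 / real (n - 2 * f)) *\<^sub>R (\<Sum>s'\<in>S. Eg s')) \<ge> \<sigma>"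
    and server_in: "\<forall>z\<in>{1..c}. Egam z \<in> aff_sub (c - 1) Ustar mstar"
    and server_outer: "\<forall>z\<in>{1..c}.
        norm (Egam z - (1 / real (card H)) *\<^sub>R (\<Sum>i\<in>H. Eg i)) \<le> \<delta>s"
    and onk: "orthonormal_cols k U"
  shows "(spec_norm {1..c} (\<lambda>z. aff_proj k U m (gam z) - Egam z))\<^sup>2
          \<le> 2 * (\<Sum>z=1..c. (norm (gam z - Egam z))\<^sup>2)
            + 4 * real c * (1 / real (n - 2 * f) + (\<delta> + \<delta>s)\<^sup>2 / \<sigma>\<^sup>2)
              * (trimmed_loss n f g k U m + (\<Sum>i\<in>H. (norm (g i - Eg i))\<^sup>2))"
proof -
  define N where "N = n - 2 * f"
  have N1: "N \<ge> 1" using n_ge unfolding N_def by simp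
  define kk where "kk = c - 1"
  have kk1: "kk \<ge> 1" using c_ge unfolding kk_def by simp
  define Rg where "Rg i = (norm (g i - aff_proj k U m (g i)))\<^sup>2" for i
  define LS where "LS = {(\<Sum>i\<in>S. Rg i) | S. S \<subseteq> {1..n} \<and> card S = n - f}"
  have tl: "trimmed_loss n f g k U m = Min LS" unfolding trimmed_loss_def LS_def Rg_def ..
  have "LS = (\<lambda>S. \<Sum>i\<in>S. Rg i) ` {S. S \<subseteq> {1..n} \<and> card S = n - f}" unfolding LS_def by blast
  hence finLS: "finite LS" by simp
  have "{1..n-f} \<subseteq> {1..n} \<and> card {1..n-f} = n - f" by simp
  hence neLS: "LS \<noteq> {}" unfolding LS_def by blast
  obtain S where S: "S \<subseteq> {1..n}" "card S = n - f" and tlS: "trimmed_loss n f g k U m = (\<Sum>i\<in>S. Rg i)"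
    using Min_in[OF finLS neLS] unfolding tl LS_def by auto
  have finS: "finite S" using S(1) finite_subset by blast
  have finH: "finite H" using H_sub finite_subset by blast
  have "card ({1..n} - H) = n - card H" using card_Diff_subset[OF finH H_sub] by simp
  hence cardH: "card H \<ge> n - f" using B_card by simp
  have "S \<subseteq> (S \<inter> H) \<union> ({1..n} - H)" using S(1) by blast
  hence "card S \<le> card (S \<inter> H) + card ({1..n} - H)"
    by (meson card_Un_le card_mono finite_Un finite_Diff finite_atLeastAtMost finite_Int finS order_trans)
  hence "N \<le> card (S \<inter> H)" using S(2) B_card unfolding N_def by simp
  then obtain T where T: "T \<subseteq> S \<inter> H" "card T = N" "finite T" by (rule obtain_subset_with_card_n)
  have TH: "T \<subseteq> H" and TS: "T \<subseteq> S" using T by auto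
  have Nr: "real N = real (card T)" using T by simp
  have Npos: "real N > 0" using N1 by simp
  define muT where "muT = (1 / real N) *\<^sub>R (\<Sum>i\<in>T. Eg i)"
  define Af where "Af = (\<lambda>s. Eg s - (1 / real (n - 2 * f)) *\<^sub>R (\<Sum>s'\<in>T. Eg s'))"
  have Afeq: "Af i = Eg i - muT" for i unfolding Af_def muT_def N_def ..
  have "\<sigma> \<le> sing_val (c - 1) T Af" using A_sing TH T(2) unfolding Af_def N_def by blast
  hence sk: "\<sigma> \<le> (SOME s. is_svd T Af s) (kk - 1)" unfolding sing_val_def kk_def .
  have svd: "is_svd T Af (SOME s. is_svd T Af s)" using someI_ex[OF svd_exists[OF T(3)]] .
  have onU: "orthonormal_cols kk Ustar" using A_sub_ortho unfolding kk_def .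
  have EgD: "inD kk Ustar (Eg i - mstar)" if "i \<in> H" for i
    using aff_inD[OF _ A_sub_ortho] A_sub that unfolding kk_def by blast
  have EgamD: "inD kk Ustar (Egam z - mstar)" if "z \<in> {1..c}" for z
    using aff_inD[OF _ A_sub_ortho] server_in that unfolding kk_def by blast
  have muTm: "muT - mstar = (\<Sum>i\<in>T. (1 / real N) *\<^sub>R (Eg i - mstar))"
    unfolding muT_def using Npos Nr by (simp add: scaleR_sum_right[symmetric] sum_subtractf scaleR_diff_right vec_of_nat_mult)
  have muTD: "inD kk Ustar (muT - mstar)" unfolding muTm by (rule inD_lin) (use EgD TH in blast)
  have AfD: "\<forall>i\<in>T. inD kk Ustar (Af i)"
  proof
    fix i assume "i \<in> T"
    have "Af i = (Eg i - mstar) - (muT - mstar)" unfolding Afeq by simp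
    thus "inD kk Ustar (Af i)" using inD_diff[OF EgD muTD] \<open>i\<in>T\<close> TH by auto
  qed
  have sum0: "(\<Sum>i\<in>T. Af i) = 0"
    unfolding Afeq muT_def using Npos Nr by (simp add: sum_subtractf vec_of_nat_mult)
  define Emu where "Emu = (1 / real (card H)) *\<^sub>R (\<Sum>i\<in>H. Eg i)"
  have Hne: "H \<noteq> {}" using T N1 TH by auto
  have d0: "\<delta> \<ge> 0" using A_outer Hne by (meson all_not_in_conv norm_ge_zero order_trans)
  have ds0: "\<delta>s \<ge> 0" using server_outer c_ge by (meson atLeastAtMost_iff norm_ge_zero one_le_numeral order_trans le_trans one_le_numeral)
  have muTEmu: "norm (muT - Emu) \<le> \<delta>"
  proof -
    have "muT - Emu = (\<Sum>i\<in>T. (1 / real N) *\<^sub>R (Eg i - Emu))"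
      unfolding muT_def using Npos Nr by (simp add: scaleR_sum_right[symmetric] sum_subtractf scaleR_diff_right vec_of_nat_mult)
    hence "norm (muT - Emu) \<le> (\<Sum>i\<in>T. norm ((1 / real N) *\<^sub>R (Eg i - Emu)))"
      using norm_sum by metis
    also have "\<dots> \<le> (\<Sum>i\<in>T. (1 / real N) * \<delta>)"
      using A_outer TH Npos unfolding Emu_def by (intro sum_mono) (auto intro!: divide_right_mono)
    also have "\<dots> = \<delta>" using Nr Npos by simp
    finally show ?thesis .
  qed
  define K0 where "K0 = 1 / real (n - 2 * f) + (\<delta> + \<delta>s)\<^sup>2 / \<sigma>\<^sup>2"
  define RE where "RE i = Lres k U (Eg i - m)" for i
  have perz: "(norm (Lres k U (Egam z - m)))^2 \<le> K0 * (\<Sum>i\<in>T. (norm (RE i))^2)" if z: "z \<in> {1..c}" for z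
  proof -
    define x where "x = Egam z - muT"
    have xD: "inD kk Ustar x"
    proof -
      have "x = (Egam z - mstar) - (muT - mstar)" unfolding x_def by simp
      thus ?thesis using inD_diff[OF EgamD[OF z] muTD] by simp
    qed
    obtain lam where lx: "x = (\<Sum>i\<in>T. lam i *\<^sub>R Af i)" and l0: "(\<Sum>i\<in>T. lam i) = 0"
      and l2: "(\<Sum>i\<in>T. (lam i)^2) \<le> (norm x)^2 / \<sigma>^2"
      using svd_repr[OF T(3) svd kk1 sigma_pos sk onU AfD sum0 xD] by blast
    have nx: "norm x \<le> \<delta> + \<delta>s"
    proof -
      have "x = (Egam z - Emu) + (Emu - muT)" unfolding x_def by simp
      hence "norm x \<le> norm (Egam z - Emu) + norm (Emu - muT)" by (metis norm_triangle_ineq)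
      moreover have "norm (Egam z - Emu) \<le> \<delta>s" using server_outer z unfolding Emu_def by blast
      moreover have "norm (Emu - muT) \<le> \<delta>" using muTEmu by (simp add: norm_minus_commute)
      ultimately show ?thesis by simp
    qed
    hence nx2: "(norm x)^2 \<le> (\<delta> + \<delta>s)^2" by (intro power_mono) auto
    define a where "a i = 1 / real N + lam i" for i
    have xl: "x = (\<Sum>i\<in>T. lam i *\<^sub>R Eg i)"
    proof -
      have "(\<Sum>i\<in>T. lam i *\<^sub>R Af i) = (\<Sum>i\<in>T. lam i *\<^sub>R Eg i) - (\<Sum>i\<in>T. lam i) *\<^sub>R muT"
        unfolding Afeq by (simp add: scaleR_diff_right sum_subtractf scaleR_sum_left)
      thus ?thesis using lx l0 by simp
    qed
    have ez: "Egam z - m = (\<Sum>i\<in>T. a i *\<^sub>R (Eg i - m))"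
    proof -
      have "(\<Sum>i\<in>T. a i *\<^sub>R (Eg i - m)) = (\<Sum>i\<in>T. (1 / real N) *\<^sub>R Eg i) + (\<Sum>i\<in>T. lam i *\<^sub>R Eg i)
              - (\<Sum>i\<in>T. a i) *\<^sub>R m"
        unfolding a_def by (simp add: scaleR_diff_right scaleR_add_left sum_subtractf sum.distrib scaleR_sum_left vec_of_nat_mult)
      also have "(\<Sum>i\<in>T. a i) = 1" unfolding a_def using l0 Nr Npos by (simp add: sum.distrib)
      also have "(\<Sum>i\<in>T. (1 / real N) *\<^sub>R Eg i) = muT" unfolding muT_def by (simp add: scaleR_sum_right)
      finally show ?thesis using xl unfolding x_def by (simp add: algebra_simps)
    qed
    have "Lres k U (Egam z - m) = (\<Sum>i\<in>T. a i *\<^sub>R RE i)" unfolding ez Lres_sum RE_def ..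
    hence "(norm (Lres k U (Egam z - m)))^2 \<le> (\<Sum>i\<in>T. (a i)^2) * (\<Sum>i\<in>T. (norm (RE i))^2)"
      using sum_sq_bound by metis
    also have "(\<Sum>i\<in>T. (a i)^2) = 1 / real N + (\<Sum>i\<in>T. (lam i)^2)"
    proof -
      have "(\<Sum>i\<in>T. (a i)^2) = (\<Sum>i\<in>T. (1 / real N)^2 + (2 / real N) * lam i + (lam i)^2)"
        unfolding a_def by (intro sum.cong refl) (simp add: power2_eq_square algebra_simps)
      also have "\<dots> = real (card T) * (1 / real N)^2 + (2 / real N) * (\<Sum>i\<in>T. lam i) + (\<Sum>i\<in>T. (lam i)^2)"
        by (simp add: sum.distrib sum_distrib_left)
      also have "\<dots> = 1 / real N + (\<Sum>i\<in>T. (lam i)^2)" using l0 Nr Npos by (simp add: power2_eq_square)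
      finally show ?thesis .
    qed
    also have "\<dots> \<le> K0"
    proof -
      have "(norm x)^2 / \<sigma>^2 \<le> (\<delta> + \<delta>s)^2 / \<sigma>^2" using nx2 sigma_pos by (simp add: divide_right_mono)
      thus ?thesis using l2 unfolding K0_def N_def by simp
    qed
    finally show ?thesis using sum_nonneg[of T "\<lambda>i. (norm (RE i))^2"] by (simp add: mult_right_mono)
  qed
  define Q where "Q = trimmed_loss n f g k U m + (\<Sum>i\<in>H. (norm (g i - Eg i))\<^sup>2)"
  have REb: "(\<Sum>i\<in>T. (norm (RE i))^2) \<le> 2 * Q"
  proof -
    have "(norm (RE i))^2 \<le> 2 * Rg i + 2 * (norm (g i - Eg i))^2" for i
    proof -
      have "RE i = Lres k U (g i - m) - Lres k U (g i - Eg i)" unfolding RE_def Lres_diff[symmetric] by simp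
      also have "Lres k U (g i - m) = g i - aff_proj k U m (g i)" using aff_res by metis
      finally have "(norm (RE i))^2 \<le> 2 * (norm (g i - aff_proj k U m (g i)))^2 + 2 * (norm (Lres k U (g i - Eg i)))^2"
        using norm_diff_sq_le by metis
      moreover have "(norm (Lres k U (g i - Eg i)))^2 \<le> (norm (g i - Eg i))^2"
        using Lres_norm_le[OF onk] by (intro power_mono) auto
      ultimately show ?thesis unfolding Rg_def by linarith
    qed
    hence "(\<Sum>i\<in>T. (norm (RE i))^2) \<le> (\<Sum>i\<in>T. 2 * Rg i + 2 * (norm (g i - Eg i))^2)" by (rule sum_mono)
    also have "\<dots> = 2 * (\<Sum>i\<in>T. Rg i) + 2 * (\<Sum>i\<in>T. (norm (g i - Eg i))^2)"
      by (simp add: sum.distrib sum_distrib_left)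
    also have "(\<Sum>i\<in>T. Rg i) \<le> (\<Sum>i\<in>S. Rg i)"
      using TS finS unfolding Rg_def by (intro sum_mono2) auto
    also have "(\<Sum>i\<in>T. (norm (g i - Eg i))^2) \<le> (\<Sum>i\<in>H. (norm (g i - Eg i))^2)"
      using TH finH by (intro sum_mono2) auto
    finally show ?thesis unfolding Q_def tlS by simp
  qed
  have col: "(norm (aff_proj k U m (gam z) - Egam z))^2 \<le> 2 * (norm (gam z - Egam z))^2 + 4 * K0 * Q"
    if z: "z \<in> {1..c}" for z
  proof -
    have "aff_proj k U m (gam z) - Egam z = Pk k U (gam z - Egam z) - Lres k U (Egam z - m)"
      using aff_proj_diff[of k U m "gam z" "Egam z"] aff_res[of "Egam z" k U m] by (simp add: algebra_simps)
    hence "(norm (aff_proj k U m (gam z) - Egam z))^2 \<le> 2 * (norm (Pk k U (gam z - Egam z)))^2 + 2 * (norm (Lres k U (Egam z - m)))^2"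
      using norm_diff_sq_le by metis
    moreover have "(norm (Pk k U (gam z - Egam z)))^2 \<le> (norm (gam z - Egam z))^2"
      using Pk_norm_le[OF onk] by (intro power_mono) auto
    moreover have "(norm (Lres k U (Egam z - m)))^2 \<le> K0 * (2 * Q)"
    proof -
      have "K0 \<ge> 0" unfolding K0_def by simp
      hence "K0 * (\<Sum>i\<in>T. (norm (RE i))^2) \<le> K0 * (2 * Q)" using REb by (intro mult_left_mono)
      thus ?thesis using perz[OF z] by simp
    qed
    ultimately show ?thesis by linarith
  qed
  have "(spec_norm {1..c} (\<lambda>z. aff_proj k U m (gam z) - Egam z))\<^sup>2
        \<le> (\<Sum>z\<in>{1..c}. (norm (aff_proj k U m (gam z) - Egam z))^2)" by (rule spec_le) simp
  also have "\<dots> \<le> (\<Sum>z\<in>{1..c}. 2 * (norm (gam z - Egam z))^2 + 4 * K0 * Q)" using col by (rule sum_mono)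
  also have "\<dots> = 2 * (\<Sum>z=1..c. (norm (gam z - Egam z))\<^sup>2) + 4 * real c * K0 * Q"
    by (simp add: sum.distrib sum_distrib_left)
  finally show ?thesis unfolding K0_def Q_def by simp
qed



lemma tl_nonneg: "trimmed_loss n f g k U m \<ge> 0"
proof -
  define LS where "LS = {(\<Sum>i\<in>S. (norm (g i - aff_proj k U m (g i)))\<^sup>2) | S. S \<subseteq> {1..n} \<and> card S = n - f}"
  have "LS = (\<lambda>S. \<Sum>i\<in>S. (norm (g i - aff_proj k U m (g i)))\<^sup>2) ` {S. S \<subseteq> {1..n} \<and> card S = n - f}"
    unfolding LS_def by blast
  hence fin: "finite LS" by simp
  have "{1..n-f} \<subseteq> {1..n} \<and> card {1..n-f} = n - f" by simp
  hence ne: "LS \<noteq> {}" unfolding LS_def by blast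
  have "Min LS \<in> LS" using Min_in[OF fin ne] .
  hence "Min LS \<ge> 0" unfolding LS_def by (auto intro!: sum_nonneg)
  thus ?thesis unfolding trimmed_loss_def LS_def .
qed

theorem mainTheorem10:
  fixes n f c :: nat
    and H :: "nat set"
    and Eg :: "nat \<Rightarrow> real^'d"
    and Egam :: "nat \<Rightarrow> real^'d"
    and Ustar :: "nat \<Rightarrow> real^'d" and mstar :: "real^'d"
    and \<delta> \<delta>s \<sigma> :: real
  assumes f_pos: "f \<ge> 1" and n_pos: "n \<ge> 1"
    and c_ge: "c \<ge> 2" and d_ge: "CARD('d) \<ge> c"
    and n_ge: "n \<ge> 2 * f + 1"
    and H_sub: "H \<subseteq> {1..n}" and B_card: "card ({1..n} - H) \<le> f"
    and A_sub_ortho: "orthonormal_cols (c - 1) Ustar"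
    and A_sub: "\<forall>i\<in>H. Eg i \<in> aff_sub (c - 1) Ustar mstar"
    and A_outer: "\<forall>i\<in>H. norm (Eg i - (1 / real (card H)) *\<^sub>R (\<Sum>i'\<in>H. Eg i')) \<le> \<delta>"
    and sigma_pos: "\<sigma> > 0"
    and A_sing: "\<forall>S. S \<subseteq> H \<and> card S = n - 2 * f \<longrightarrow>
        sing_val (c - 1) S
          (\<lambda>s. Eg s - (1 / real (n - 2 * f)) *\<^sub>R (\<Sum>s'\<in>S. Eg s')) \<ge> \<sigma>"
    and server_in: "\<forall>z\<in>{1..c}. Egam z \<in> aff_sub (c - 1) Ustar mstar"
    and server_outer: "\<forall>z\<in>{1..c}.
        norm (Egam z - (1 / real (card H)) *\<^sub>R (\<Sum>i\<in>H. Eg i)) \<le> \<delta>s"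
  shows
    "(\<forall>(g :: nat \<Rightarrow> real^'d) (gam :: nat \<Rightarrow> real^'d) (k :: nat) (U :: nat \<Rightarrow> real^'d) m.
        orthonormal_cols k U \<longrightarrow>
        (spec_norm {1..c} (\<lambda>z. aff_proj k U m (gam z) - Egam z))\<^sup>2
          \<le> 2 * (\<Sum>z=1..c. (norm (gam z - Egam z))\<^sup>2)
            + 4 * real c * (1 / real (n - 2 * f) + (\<delta> + \<delta>s)\<^sup>2 / \<sigma>\<^sup>2)
              * (trimmed_loss n f g k U m + (\<Sum>i\<in>H. (norm (g i - Eg i))\<^sup>2)))
   \<and>
    (\<forall>(M :: 'w measure) (g :: 'w \<Rightarrow> nat \<Rightarrow> real^'d) (gam :: 'w \<Rightarrow> nat \<Rightarrow> real^'d)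
       (k :: nat) (U :: 'w \<Rightarrow> nat \<Rightarrow> real^'d) (m :: 'w \<Rightarrow> real^'d) (\<epsilon> :: real) (\<epsilon>s :: real).
        prob_space M \<longrightarrow>
        (\<forall>\<omega>\<in>space M. orthonormal_cols k (U \<omega>)) \<longrightarrow>
        (\<forall>i\<in>H. (\<lambda>\<omega>. g \<omega> i) \<in> borel_measurable M) \<longrightarrow>
        (\<forall>z\<in>{1..c}. (\<lambda>\<omega>. gam \<omega> z) \<in> borel_measurable M) \<longrightarrow>
        (\<lambda>\<omega>. trimmed_loss n f (g \<omega>) k (U \<omega>) (m \<omega>)) \<in> borel_measurable M \<longrightarrow>
        (\<forall>i\<in>H. (\<integral>\<^sup>+\<omega>. ennreal ((norm (g \<omega> i - Eg i))\<^sup>2) \<partial>M) \<le> ennreal (\<epsilon>\<^sup>2)) \<longrightarrow>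
        (\<forall>z\<in>{1..c}. (\<integral>\<^sup>+\<omega>. ennreal ((norm (gam \<omega> z - Egam z))\<^sup>2) \<partial>M) \<le> ennreal (\<epsilon>s\<^sup>2)) \<longrightarrow>
        (\<integral>\<^sup>+\<omega>. ennreal ((spec_norm {1..c} (\<lambda>z. aff_proj k (U \<omega>) (m \<omega>) (gam \<omega> z) - Egam z))\<^sup>2) \<partial>M)
          \<le> ennreal (2 * real c * \<epsilon>s\<^sup>2)
            + ennreal (4 * real c * (1 / real (n - 2 * f) + (\<delta> + \<delta>s)\<^sup>2 / \<sigma>\<^sup>2))
              * ((\<integral>\<^sup>+\<omega>. ennreal (trimmed_loss n f (g \<omega>) k (U \<omega>) (m \<omega>)) \<partial>M)
                 + ennreal (real (card H) * \<epsilon>\<^sup>2)))"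
proof (intro conjI allI impI)
  fix g gam :: "nat \<Rightarrow> real^'d" and k :: nat and U :: "nat \<Rightarrow> real^'d" and m
  assume "orthonormal_cols k U"
  thus "(spec_norm {1..c} (\<lambda>z. aff_proj k U m (gam z) - Egam z))\<^sup>2
          \<le> 2 * (\<Sum>z=1..c. (norm (gam z - Egam z))\<^sup>2)
            + 4 * real c * (1 / real (n - 2 * f) + (\<delta> + \<delta>s)\<^sup>2 / \<sigma>\<^sup>2)
              * (trimmed_loss n f g k U m + (\<Sum>i\<in>H. (norm (g i - Eg i))\<^sup>2))"
    using part1[OF c_ge n_ge H_sub B_card A_sub_ortho A_sub A_outer sigma_pos A_sing server_in server_outer]
    by blast
next
  fix M :: "'w measure" and g :: "'w \<Rightarrow> nat \<Rightarrow> real^'d" and gam :: "'w \<Rightarrow> nat \<Rightarrow> real^'d"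
    and k :: nat and U :: "'w \<Rightarrow> nat \<Rightarrow> real^'d" and m :: "'w \<Rightarrow> real^'d" and \<epsilon> \<epsilon>s :: real
  assume ps: "prob_space M"
    and onU: "\<forall>\<omega>\<in>space M. orthonormal_cols k (U \<omega>)"
    and gm: "\<forall>i\<in>H. (\<lambda>\<omega>. g \<omega> i) \<in> borel_measurable M"
    and gamm: "\<forall>z\<in>{1..c}. (\<lambda>\<omega>. gam \<omega> z) \<in> borel_measurable M"
    and tlm: "(\<lambda>\<omega>. trimmed_loss n f (g \<omega>) k (U \<omega>) (m \<omega>)) \<in> borel_measurable M"
    and eg: "\<forall>i\<in>H. (\<integral>\<^sup>+\<omega>. ennreal ((norm (g \<omega> i - Eg i))\<^sup>2) \<partial>M) \<le> ennreal (\<epsilon>\<^sup>2)"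
    and egam: "\<forall>z\<in>{1..c}. (\<integral>\<^sup>+\<omega>. ennreal ((norm (gam \<omega> z - Egam z))\<^sup>2) \<partial>M) \<le> ennreal (\<epsilon>s\<^sup>2)"
  define K where "K = 4 * real c * (1 / real (n - 2 * f) + (\<delta> + \<delta>s)\<^sup>2 / \<sigma>\<^sup>2)"
  have K0: "K \<ge> 0" unfolding K_def by simp
  define L where "L \<omega> = trimmed_loss n f (g \<omega>) k (U \<omega>) (m \<omega>)" for \<omega>
  define Ga where "Ga z \<omega> = (norm (gam \<omega> z - Egam z))\<^sup>2" for z \<omega>
  define Gg where "Gg i \<omega> = (norm (g \<omega> i - Eg i))\<^sup>2" for i \<omega>
  have L0: "L \<omega> \<ge> 0" for \<omega> unfolding L_def by (rule tl_nonneg)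
  have Gam: "(\<lambda>\<omega>. ennreal (Ga z \<omega>)) \<in> borel_measurable M" if "z \<in> {1..c}" for z
  proof -
    have "(\<lambda>\<omega>. gam \<omega> z) \<in> borel_measurable M" using gamm that by blast
    thus ?thesis unfolding Ga_def by measurable
  qed
  have Ggm: "(\<lambda>\<omega>. ennreal (Gg i \<omega>)) \<in> borel_measurable M" if "i \<in> H" for i
  proof -
    have "(\<lambda>\<omega>. g \<omega> i) \<in> borel_measurable M" using gm that by blast
    thus ?thesis unfolding Gg_def by measurable
  qed
  have Lm: "(\<lambda>\<omega>. ennreal (L \<omega>)) \<in> borel_measurable M" using tlm unfolding L_def by measurable
  have pw: "ennreal ((spec_norm {1..c} (\<lambda>z. aff_proj k (U \<omega>) (m \<omega>) (gam \<omega> z) - Egam z))\<^sup>2)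
      \<le> ennreal 2 * (\<Sum>z\<in>{1..c}. ennreal (Ga z \<omega>)) + ennreal K * (ennreal (L \<omega>) + (\<Sum>i\<in>H. ennreal (Gg i \<omega>)))"
    if "\<omega> \<in> space M" for \<omega>
  proof -
    have b: "(spec_norm {1..c} (\<lambda>z. aff_proj k (U \<omega>) (m \<omega>) (gam \<omega> z) - Egam z))\<^sup>2
        \<le> 2 * (\<Sum>z\<in>{1..c}. Ga z \<omega>) + K * (L \<omega> + (\<Sum>i\<in>H. Gg i \<omega>))"
      using part1[OF c_ge n_ge H_sub B_card A_sub_ortho A_sub A_outer sigma_pos A_sing server_in server_outer,
          of k "U \<omega>" "m \<omega>" "gam \<omega>" "g \<omega>"] onU that unfolding K_def L_def Ga_def Gg_def by simp
    have nn1: "0 \<le> (\<Sum>z\<in>{1..c}. Ga z \<omega>)" unfolding Ga_def by (simp add: sum_nonneg)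
    have nn2: "0 \<le> (\<Sum>i\<in>H. Gg i \<omega>)" unfolding Gg_def by (simp add: sum_nonneg)
    have "ennreal (2 * (\<Sum>z\<in>{1..c}. Ga z \<omega>) + K * (L \<omega> + (\<Sum>i\<in>H. Gg i \<omega>)))
        = ennreal 2 * (\<Sum>z\<in>{1..c}. ennreal (Ga z \<omega>)) + ennreal K * (ennreal (L \<omega>) + (\<Sum>i\<in>H. ennreal (Gg i \<omega>)))"
      using nn1 nn2 K0 L0[of \<omega>]
      by (simp add: ennreal_mult Ga_def Gg_def ennreal_plus add_nonneg_nonneg mult_nonneg_nonneg)
    thus ?thesis using ennreal_leI[OF b] by simp
  qed
  have "(\<integral>\<^sup>+\<omega>. ennreal ((spec_norm {1..c} (\<lambda>z. aff_proj k (U \<omega>) (m \<omega>) (gam \<omega> z) - Egam z))\<^sup>2) \<partial>M)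
      \<le> (\<integral>\<^sup>+\<omega>. ennreal 2 * (\<Sum>z\<in>{1..c}. ennreal (Ga z \<omega>)) + ennreal K * (ennreal (L \<omega>) + (\<Sum>i\<in>H. ennreal (Gg i \<omega>))) \<partial>M)"
    by (rule nn_integral_mono) (rule pw)
  also have "\<dots> = ennreal 2 * (\<Sum>z\<in>{1..c}. (\<integral>\<^sup>+\<omega>. ennreal (Ga z \<omega>) \<partial>M))
       + ennreal K * ((\<integral>\<^sup>+\<omega>. ennreal (L \<omega>) \<partial>M) + (\<Sum>i\<in>H. (\<integral>\<^sup>+\<omega>. ennreal (Gg i \<omega>) \<partial>M)))"
  proof -
    have m1: "(\<lambda>\<omega>. \<Sum>z\<in>{1..c}. ennreal (Ga z \<omega>)) \<in> borel_measurable M"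
      using Gam by (intro borel_measurable_sum) auto
    have m2: "(\<lambda>\<omega>. \<Sum>i\<in>H. ennreal (Gg i \<omega>)) \<in> borel_measurable M"
      using Ggm by (intro borel_measurable_sum) auto
    have m3: "(\<lambda>\<omega>. ennreal (L \<omega>) + (\<Sum>i\<in>H. ennreal (Gg i \<omega>))) \<in> borel_measurable M"
      using Lm m2 by measurable
    have i1: "(\<integral>\<^sup>+\<omega>. ennreal 2 * (\<Sum>z\<in>{1..c}. ennreal (Ga z \<omega>)) \<partial>M)
        = ennreal 2 * (\<Sum>z\<in>{1..c}. (\<integral>\<^sup>+\<omega>. ennreal (Ga z \<omega>) \<partial>M))"
      using nn_integral_cmult[OF m1, of "ennreal 2"] nn_integral_sum[of "{1..c}" "\<lambda>z \<omega>. ennreal (Ga z \<omega>)" M] Gam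
      by simp
    have i2: "(\<integral>\<^sup>+\<omega>. ennreal K * (ennreal (L \<omega>) + (\<Sum>i\<in>H. ennreal (Gg i \<omega>))) \<partial>M)
        = ennreal K * ((\<integral>\<^sup>+\<omega>. ennreal (L \<omega>) \<partial>M) + (\<Sum>i\<in>H. (\<integral>\<^sup>+\<omega>. ennreal (Gg i \<omega>) \<partial>M)))"
      using nn_integral_cmult[OF m3, of "ennreal K"] nn_integral_add[OF Lm m2]
        nn_integral_sum[of H "\<lambda>i \<omega>. ennreal (Gg i \<omega>)" M] Ggm
      by simp
    have m4: "(\<lambda>\<omega>. ennreal 2 * (\<Sum>z\<in>{1..c}. ennreal (Ga z \<omega>))) \<in> borel_measurable M"
      using m1 by measurable
    have m5: "(\<lambda>\<omega>. ennreal K * (ennreal (L \<omega>) + (\<Sum>i\<in>H. ennreal (Gg i \<omega>)))) \<in> borel_measurable M"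
      using m3 by measurable
    show ?thesis using nn_integral_add[OF m4 m5] i1 i2 by simp
  qed
  also have "\<dots> \<le> ennreal 2 * (\<Sum>z\<in>{1..c}. ennreal (\<epsilon>s\<^sup>2))
       + ennreal K * ((\<integral>\<^sup>+\<omega>. ennreal (L \<omega>) \<partial>M) + (\<Sum>i\<in>H. ennreal (\<epsilon>\<^sup>2)))"
    using egam eg unfolding Ga_def Gg_def
    by (intro add_mono mult_left_mono sum_mono order.refl) auto
  also have "(\<Sum>z\<in>{1..c}. ennreal (\<epsilon>s\<^sup>2)) = ennreal (real c * \<epsilon>s\<^sup>2)"
    by (simp add: ennreal_mult ennreal_of_nat_eq_real_of_nat)
  also have "(\<Sum>i\<in>H. ennreal (\<epsilon>\<^sup>2)) = ennreal (real (card H) * \<epsilon>\<^sup>2)"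
    by (simp add: ennreal_mult ennreal_of_nat_eq_real_of_nat)
  also have "ennreal 2 * ennreal (real c * \<epsilon>s\<^sup>2) = ennreal (2 * real c * \<epsilon>s\<^sup>2)"
    using numeral_mult_ennreal[of "real c * \<epsilon>s\<^sup>2" "num.Bit0 num.One"] by (simp add: mult.assoc)
  finally show "(\<integral>\<^sup>+\<omega>. ennreal ((spec_norm {1..c} (\<lambda>z. aff_proj k (U \<omega>) (m \<omega>) (gam \<omega> z) - Egam z))\<^sup>2) \<partial>M)
          \<le> ennreal (2 * real c * \<epsilon>s\<^sup>2)
            + ennreal (4 * real c * (1 / real (n - 2 * f) + (\<delta> + \<delta>s)\<^sup>2 / \<sigma>\<^sup>2))
              * ((\<integral>\<^sup>+\<omega>. ennreal (trimmed_loss n f (g \<omega>) k (U \<omega>) (m \<omega>)) \<partial>M)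
                 + ennreal (real (card H) * \<epsilon>\<^sup>2))" unfolding K_def L_def .
qed


end
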